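(* Let $\langle E,\rightarrow\rangle$ be a computation and $b$ a regular predicate. The graph $S_b(E)$ has the same set of consistent cuts as the slice of $\langle E,\rightarrow\rangle$ with respect to $b$.
   Context: A computation is a directed graph $\langle E, \rightarrow\rangle$ whose vertices (events) are partitioned among processes $p_1,\dots,p_n$; events on each process are totally ordered, each process $p_i$ has an initial event $\bot_i$ (first) and final event $\top_i$ (last), the path relation contains Lamport's happened-before relation, all initial events lie in one strongly connected component and all final events in one strongly connected component. $\top$ is the set of final events and $\mathrm{succ}(e)$ the successor of $e$ on its process. A subset $C$ of the vertices of a directed graph is a consistent cut if for every edge $(u,v)$, $v\in C$ implies $u\in C$; $\emptyset,E$ are trivial. A predicate (evaluated on non-trivial consistent cuts) is regular if whenever consistent cuts $C_1,C_2$ satisfy it, so do $C_1\cap C_2$ and $C_1\cup C_2$. $J_b(e)$ is the least consistent cut of $\langle E,\rightarrow\rangle$ that satisfies $b$ and contains $e$, or $E$ if none exists or $e\in\top$. $F_b(e)[i]$ is the earliest event $g$ on $p_i$ with $J_b(e)\subseteq J_b(g)$. $S_b(E)$ has vertex set $E$ and edges from each $e\notin\top$ to $\mathrm{succ}(e)$ and from each $e$ to $F_b(e)[i]$ for every $i$. The slice of $\langle E,\rightarrow\rangle$ with respect to $b$ is a directed graph on $E$ whose consistent cuts include every consistent cut of $\langle E,\rightarrow\rangle$ satisfying $b$ and which has the fewest consistent cuts among all such graphs. *)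

theory Defs
  imports Main
begin

text \<open>A computation on processes p_0..p_(n-1): process i has the list of events ev i
  (first element = initial event, last element = final event); E is the event set and
  R the edge relation of the directed graph.\<close>

definition events :: "nat \<Rightarrow> (nat \<Rightarrow> 'e list) \<Rightarrow> 'e set" where
  "events n ev = (\<Union>i<n. set (ev i))"

definition bot_events :: "nat \<Rightarrow> (nat \<Rightarrow> 'e list) \<Rightarrow> 'e set" where
  "bot_events n ev = {hd (ev i) | i. i < n}"

definition top_events :: "nat \<Rightarrow> (nat \<Rightarrow> 'e list) \<Rightarrow> 'e set" where
  "top_events n ev = {last (ev i) | i. i < n}"

definition computation :: "nat \<Rightarrow> (nat \<Rightarrow> 'e list) \<Rightarrow> ('e \<times> 'e) set \<Rightarrow> bool" where
  "computation n ev R \<longleftrightarrow>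
     n \<ge> 1 \<and>
     (\<forall>i<n. distinct (ev i) \<and> length (ev i) \<ge> 2) \<and>
     (\<forall>i<n. \<forall>j<n. i \<noteq> j \<longrightarrow> set (ev i) \<inter> set (ev j) = {}) \<and>
     R \<subseteq> events n ev \<times> events n ev \<and>
     (\<forall>i<n. \<forall>j k. j < k \<and> k < length (ev i) \<longrightarrow> (ev i ! j, ev i ! k) \<in> R\<^sup>*) \<and>
     (\<forall>i<n. \<forall>j<n. (hd (ev i), hd (ev j)) \<in> R\<^sup>*) \<and>
     (\<forall>i<n. \<forall>j<n. (last (ev i), last (ev j)) \<in> R\<^sup>*)"

definition consistent_cut :: "'e set \<Rightarrow> ('e \<times> 'e) set \<Rightarrow> 'e set \<Rightarrow> bool" where
  "consistent_cut V G C \<longleftrightarrow> C \<subseteq> V \<and> (\<forall>u v. (u, v) \<in> G \<longrightarrow> v \<in> C \<longrightarrow> u \<in> C)"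

text \<open>A cut satisfies predicate b: it is a non-trivial consistent cut of the computation
  on which b holds (predicates are only evaluated on non-trivial consistent cuts).\<close>
definition satisfies :: "'e set \<Rightarrow> ('e \<times> 'e) set \<Rightarrow> ('e set \<Rightarrow> bool) \<Rightarrow> 'e set \<Rightarrow> bool" where
  "satisfies E R b C \<longleftrightarrow> consistent_cut E R C \<and> C \<noteq> {} \<and> C \<noteq> E \<and> b C"

definition regular :: "'e set \<Rightarrow> ('e \<times> 'e) set \<Rightarrow> ('e set \<Rightarrow> bool) \<Rightarrow> bool" where
  "regular E R b \<longleftrightarrow> (\<forall>C1 C2. satisfies E R b C1 \<and> satisfies E R b C2 \<longrightarrow>
      satisfies E R b (C1 \<inter> C2) \<and> satisfies E R b (C1 \<union> C2))"

definition J :: "nat \<Rightarrow> (nat \<Rightarrow> 'e list) \<Rightarrow> ('e \<times> 'e) set \<Rightarrow> ('e set \<Rightarrow> bool) \<Rightarrow> 'e \<Rightarrow> 'e set" where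
  "J n ev R b e =
     (if e \<in> top_events n ev \<or> \<not> (\<exists>C. satisfies (events n ev) R b C \<and> e \<in> C)
      then events n ev
      else (THE C. satisfies (events n ev) R b C \<and> e \<in> C \<and>
                 (\<forall>D. satisfies (events n ev) R b D \<and> e \<in> D \<longrightarrow> C \<subseteq> D)))"

definition F :: "nat \<Rightarrow> (nat \<Rightarrow> 'e list) \<Rightarrow> ('e \<times> 'e) set \<Rightarrow> ('e set \<Rightarrow> bool) \<Rightarrow> 'e \<Rightarrow> nat \<Rightarrow> 'e" where
  "F n ev R b e i =
     ev i ! (LEAST k. k < length (ev i) \<and> J n ev R b e \<subseteq> J n ev R b (ev i ! k))"

definition S_edges :: "nat \<Rightarrow> (nat \<Rightarrow> 'e list) \<Rightarrow> ('e \<times> 'e) set \<Rightarrow> ('e set \<Rightarrow> bool) \<Rightarrow> ('e \<times> 'e) set" where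
  "S_edges n ev R b =
     {(ev i ! k, ev i ! Suc k) | i k. i < n \<and> Suc k < length (ev i)} \<union>
     {(e, F n ev R b e i) | e i. e \<in> events n ev \<and> i < n}"

definition is_slice :: "'e set \<Rightarrow> ('e \<times> 'e) set \<Rightarrow> ('e set \<Rightarrow> bool) \<Rightarrow> ('e \<times> 'e) set \<Rightarrow> bool" where
  "is_slice E R b G \<longleftrightarrow>
     G \<subseteq> E \<times> E \<and> (\<forall>C. satisfies E R b C \<longrightarrow> consistent_cut E G C) \<and>
     (\<forall>G'. G' \<subseteq> E \<times> E \<and> (\<forall>C. satisfies E R b C \<longrightarrow> consistent_cut E G' C) \<longrightarrow>
        card {C. consistent_cut E G C} \<le> card {C. consistent_cut E G' C})"

end

theory Submission
  imports Defs
begin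

locale comp9 =
  fixes n :: nat and ev :: "nat \<Rightarrow> 'e list" and R :: "('e \<times> 'e) set"
    and b :: "'e set \<Rightarrow> bool"
  assumes comp: "computation n ev R" and reg: "regular (events n ev) R b"
begin

abbreviation "EE \<equiv> events n ev"
abbreviation "Sat \<equiv> satisfies EE R b"
abbreviation "SS \<equiv> S_edges n ev R b"
abbreviation "JJ \<equiv> J n ev R b"

lemma finE: "finite EE" unfolding events_def by auto

lemma Sat_sub: "Sat C \<Longrightarrow> C \<subseteq> EE"
  unfolding satisfies_def consistent_cut_def by auto

lemma proc: assumes "i < n" "j \<le> k" "k < length (ev i)"
  shows "(ev i ! j, ev i ! k) \<in> R\<^sup>*"
proof (cases "j = k")
  case False
  then show ?thesis using comp assms unfolding computation_def by auto
qed simp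

lemma rt_closed:
  assumes "consistent_cut EE R C" "(u,v) \<in> R\<^sup>*" "v \<in> C" shows "u \<in> C"
  using assms(2,3)
proof (induction rule: converse_rtrancl_induct)
  case (step y z)
  then show ?case using assms(1) unfolding consistent_cut_def by blast
qed simp

lemma E_mem: "e \<in> EE \<Longrightarrow> \<exists>i<n. \<exists>k<length (ev i). e = ev i ! k"
  unfolding events_def by (auto simp: in_set_conv_nth)

lemma len2: "i < n \<Longrightarrow> length (ev i) \<ge> 2"
  using comp unfolding computation_def by auto

lemma last_nth: "i < n \<Longrightarrow> last (ev i) = ev i ! (length (ev i) - 1)"
  using len2[of i] by (intro last_conv_nth) auto

lemma to_top: assumes "e \<in> EE" "i < n" shows "(e, last (ev i)) \<in> R\<^sup>*"
proof -
  obtain j k where jk: "j < n" "k < length (ev j)" "e = ev j ! k" using E_mem[OF assms(1)] by blast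
  have "(e, last (ev j)) \<in> R\<^sup>*" using proc[of j k "length (ev j) - 1"] jk last_nth[OF jk(1)] by auto
  moreover have "(last (ev j), last (ev i)) \<in> R\<^sup>*" using comp jk(1) assms(2) unfolding computation_def by auto
  ultimately show ?thesis by (rule rtrancl_trans)
qed

lemma sat_no_top: assumes "Sat C" "t \<in> top_events n ev" shows "t \<notin> C"
proof
  assume tC: "t \<in> C"
  obtain i where i: "i < n" "t = last (ev i)" using assms(2) unfolding top_events_def by auto
  have cc: "consistent_cut EE R C" using assms(1) unfolding satisfies_def by auto
  have "EE \<subseteq> C" using to_top[OF _ i(1)] rt_closed[OF cc] tC i(2) by blast
  then show False using Sat_sub[OF assms(1)] assms(1) unfolding satisfies_def by auto
qed

lemma sat_inter: "finite A \<Longrightarrow> A \<noteq> {} \<Longrightarrow> \<forall>C\<in>A. Sat C \<Longrightarrow> Sat (\<Inter>A)"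
proof (induction A rule: finite_ne_induct)
  case (insert x A)
  then show ?case using reg unfolding regular_def by auto
qed simp

lemma sat_union: "finite A \<Longrightarrow> A \<noteq> {} \<Longrightarrow> \<forall>C\<in>A. Sat C \<Longrightarrow> Sat (\<Union>A)"
proof (induction A rule: finite_ne_induct)
  case (insert x A)
  then show ?case using reg unfolding regular_def by auto
qed simp

lemma J_least: assumes "e \<notin> top_events n ev" "\<exists>C. Sat C \<and> e \<in> C"
  shows "Sat (JJ e) \<and> e \<in> JJ e \<and> (\<forall>D. Sat D \<and> e \<in> D \<longrightarrow> JJ e \<subseteq> D)"
proof -
  let ?F = "{C. Sat C \<and> e \<in> C}"
  have fin: "finite ?F"
    by (rule finite_subset[of _ "Pow EE"]) (auto dest: Sat_sub simp: finE)
  have ne: "?F \<noteq> {}" using assms(2) by blast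
  have al: "\<forall>C\<in>?F. Sat C" by blast
  have S: "Sat (\<Inter>?F)" by (rule sat_inter[OF fin ne al])
  have P: "Sat (\<Inter>?F) \<and> e \<in> \<Inter>?F \<and> (\<forall>D. Sat D \<and> e \<in> D \<longrightarrow> \<Inter>?F \<subseteq> D)"
    using S by auto
  have "JJ e = (THE C. Sat C \<and> e \<in> C \<and> (\<forall>D. Sat D \<and> e \<in> D \<longrightarrow> C \<subseteq> D))"
    unfolding J_def by (rule if_not_P) (use assms in blast)
  also have "\<dots> = \<Inter>?F"
  proof (rule the_equality)
    show "Sat (\<Inter>?F) \<and> e \<in> \<Inter>?F \<and> (\<forall>D. Sat D \<and> e \<in> D \<longrightarrow> \<Inter>?F \<subseteq> D)" using P .
    fix C assume C: "Sat C \<and> e \<in> C \<and> (\<forall>D. Sat D \<and> e \<in> D \<longrightarrow> C \<subseteq> D)"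
    then have "C \<subseteq> \<Inter>?F" by auto
    moreover have "\<Inter>?F \<subseteq> C" using C by auto
    ultimately show "C = \<Inter>?F" by (rule subset_antisym)
  qed
  finally show ?thesis using P by simp
qed

lemma J_else: "e \<in> top_events n ev \<or> \<not> (\<exists>C. Sat C \<and> e \<in> C) \<Longrightarrow> JJ e = EE"
  unfolding J_def by (rule if_P)

lemma J_sub: "JJ e \<subseteq> EE"
proof (cases "e \<in> top_events n ev \<or> \<not> (\<exists>C. Sat C \<and> e \<in> C)")
  case True then show ?thesis using J_else by simp
next
  case False then show ?thesis using J_least[of e] Sat_sub by simp
qed

lemma J_self: "e \<in> EE \<Longrightarrow> e \<in> JJ e"
proof (cases "e \<in> top_events n ev \<or> \<not> (\<exists>C. Sat C \<and> e \<in> C)")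
  case True then show "e \<in> EE \<Longrightarrow> e \<in> JJ e" using J_else by simp
next
  case False then show "e \<in> EE \<Longrightarrow> e \<in> JJ e" using J_least[of e] by simp
qed

lemma J_last: "i < n \<Longrightarrow> JJ (last (ev i)) = EE"
  by (rule J_else) (auto simp: top_events_def)

lemma F_prop: assumes "i < n"
  obtains m where "F n ev R b e i = ev i ! m" "m < length (ev i)" "JJ e \<subseteq> JJ (ev i ! m)"
    "\<And>k. k < length (ev i) \<Longrightarrow> JJ e \<subseteq> JJ (ev i ! k) \<Longrightarrow> m \<le> k"
proof -
  let ?P = "\<lambda>k. k < length (ev i) \<and> JJ e \<subseteq> JJ (ev i ! k)"
  have ex: "?P (length (ev i) - 1)" using len2[OF assms] J_last[OF assms] last_nth[OF assms] J_sub
    by auto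
  have "?P (LEAST k. ?P k)" using ex by (rule LeastI)
  moreover have "\<And>k. ?P k \<Longrightarrow> (LEAST k. ?P k) \<le> k" by (rule Least_le)
  ultimately show ?thesis using that unfolding F_def by blast
qed

lemma S_sub: "SS \<subseteq> EE \<times> EE"
proof
  fix x assume "x \<in> SS"
  then consider (a) i k where "i < n" "Suc k < length (ev i)" "x = (ev i ! k, ev i ! Suc k)"
    | (b) e i where "e \<in> EE" "i < n" "x = (e, F n ev R b e i)"
    unfolding S_edges_def by blast
  then show "x \<in> EE \<times> EE"
  proof cases
    case a
    then have "ev i ! k \<in> set (ev i)" "ev i ! Suc k \<in> set (ev i)" by auto
    then show ?thesis using a unfolding events_def by blast
  next
    case b
    then obtain m where "F n ev R b e i = ev i ! m" "m < length (ev i)" using F_prop by metis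
    then have "F n ev R b e i \<in> set (ev i)" by auto
    then show ?thesis using b unfolding events_def by blast
  qed
qed

lemma prefix: assumes "consistent_cut EE SS C" "i < n"
  shows "k < length (ev i) \<Longrightarrow> ev i ! k \<in> C \<Longrightarrow> m \<le> k \<Longrightarrow> ev i ! m \<in> C"
proof (induction k)
  case (Suc k)
  have "(ev i ! k, ev i ! Suc k) \<in> SS" using Suc.prems assms(2) unfolding S_edges_def by blast
  then have "ev i ! k \<in> C" using assms(1) Suc.prems unfolding consistent_cut_def by blast
  then show ?case using Suc by (cases "m = Suc k") auto
qed simp

lemma dir1: assumes "Sat C" shows "consistent_cut EE SS C"
  unfolding consistent_cut_def
proof (intro conjI allI impI)
  show "C \<subseteq> EE" using Sat_sub[OF assms] .
  have cc: "consistent_cut EE R C" using assms unfolding satisfies_def by auto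
  fix u v assume uv: "(u, v) \<in> SS" and vC: "v \<in> C"
  from uv consider (a) i k where "i < n" "Suc k < length (ev i)" "u = ev i ! k" "v = ev i ! Suc k"
    | (b) i where "u \<in> EE" "i < n" "v = F n ev R b u i"
    unfolding S_edges_def by blast
  then show "u \<in> C"
  proof cases
    case a
    then have "(u, v) \<in> R\<^sup>*" using proc[of i k "Suc k"] by auto
    then show ?thesis using rt_closed[OF cc] vC by blast
  next
    case b
    obtain m where m: "v = ev i ! m" "JJ u \<subseteq> JJ (ev i ! m)" using F_prop[OF b(2), of u] b(3) by metis
    have "v \<notin> top_events n ev" using sat_no_top[OF assms] vC by blast
    then have "JJ v \<subseteq> C" using J_least[of v] assms vC by blast
    then show ?thesis using m J_self[OF b(1)] by blast
  qed
qed

lemma dir2: assumes cS: "consistent_cut EE SS C" and ne: "C \<noteq> {}" and nE: "C \<noteq> EE"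
  shows "Sat C"
proof -
  have CE: "C \<subseteq> EE" using cS unfolding consistent_cut_def by auto
  have sub: "JJ f \<subseteq> C" if fC: "f \<in> C" for f
  proof
    fix e assume eJ: "e \<in> JJ f"
    have fE: "f \<in> EE" using fC CE by blast
    obtain j k where jk: "j < n" "k < length (ev j)" "f = ev j ! k" using E_mem[OF fE] by blast
    have eE: "e \<in> EE" using eJ J_sub by blast
    have JeJf: "JJ e \<subseteq> JJ f"
    proof (cases "JJ f = EE")
      case True then show ?thesis using J_sub by simp
    next
      case False
      then have "f \<notin> top_events n ev" "\<exists>C. Sat C \<and> f \<in> C" using J_else[of f] by auto
      then have SJ: "Sat (JJ f)" using J_least by blast
      then have "e \<notin> top_events n ev" using sat_no_top eJ by blast
      then show ?thesis using J_least[of e] SJ eJ by blast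
    qed
    obtain m where m: "F n ev R b e j = ev j ! m"
      "\<And>k. k < length (ev j) \<Longrightarrow> JJ e \<subseteq> JJ (ev j ! k) \<Longrightarrow> m \<le> k"
      using F_prop[OF jk(1), of e] by metis
    have "m \<le> k" using m(2)[OF jk(2)] JeJf jk(3) by blast
    then have "F n ev R b e j \<in> C" using prefix[OF cS jk(1) jk(2)] fC jk(3) m(1) by auto
    moreover have "(e, F n ev R b e j) \<in> SS" using eE jk(1) unfolding S_edges_def by blast
    ultimately show "e \<in> C" using cS unfolding consistent_cut_def by blast
  qed
  have each: "Sat (JJ f)" if fC: "f \<in> C" for f
  proof (cases "JJ f = EE")
    case True then show ?thesis using sub[OF fC] CE nE by auto
  next
    case False
    then have "f \<notin> top_events n ev" "\<exists>C. Sat C \<and> f \<in> C" using J_else[of f] by auto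
    then show ?thesis using J_least by blast
  qed
  have eq: "C = \<Union>(JJ ` C)" using sub J_self CE by blast
  have "finite C" using CE finE finite_subset by blast
  then have "Sat (\<Union>(JJ ` C))" using sat_union[of "JJ ` C"] each ne by auto
  then show ?thesis using eq by simp
qed

lemma cutsS: "{C. consistent_cut EE SS C} = {C. Sat C} \<union> {{}, EE}"
proof -
  have "consistent_cut EE SS {}" unfolding consistent_cut_def by auto
  moreover have "consistent_cut EE SS EE" using S_sub unfolding consistent_cut_def by auto
  ultimately show ?thesis using dir1 dir2 by blast
qed

end

theorem theorem9:
  fixes n :: nat and ev :: "nat \<Rightarrow> 'e list" and R :: "('e \<times> 'e) set"
    and b :: "'e set \<Rightarrow> bool" and G :: "('e \<times> 'e) set"
  assumes "computation n ev R"
    and "regular (events n ev) R b"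
    and "is_slice (events n ev) R b G"
  shows "{C. consistent_cut (events n ev) (S_edges n ev R b) C} = {C. consistent_cut (events n ev) G C}"
proof -
  interpret comp9 n ev R b using assms(1,2) by unfold_locales
  let ?L = "{C. Sat C} \<union> {{}, EE}"
  have Gsub: "G \<subseteq> EE \<times> EE" and Gsat: "\<forall>C. Sat C \<longrightarrow> consistent_cut EE G C"
    and Gmin: "card {C. consistent_cut EE G C} \<le> card {C. consistent_cut EE SS C}"
    using assms(3) S_sub dir1 unfolding is_slice_def by auto
  have "consistent_cut EE G {}" unfolding consistent_cut_def by auto
  moreover have "consistent_cut EE G EE" using Gsub unfolding consistent_cut_def by auto
  ultimately have sub: "?L \<subseteq> {C. consistent_cut EE G C}" using Gsat by blast
  have fin: "finite {C. consistent_cut EE G C}"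
    by (rule finite_subset[of _ "Pow EE"]) (auto simp: consistent_cut_def finE)
  have "?L = {C. consistent_cut EE G C}"
    using card_seteq[OF fin sub] Gmin cutsS by simp
  then show ?thesis using cutsS by simp
qed

end
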